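(* For every Borel function $f:\mathbb{R}\to\mathbb{R}$ there is a nonempty perfect set $P\subseteq\mathbb{R}$ such that $f^{-1}[P]$ is both meager and Lebesgue null. *)

theory Defs
  imports "HOL-Analysis.Analysis"
begin

definition perfect_set :: "real set \<Rightarrow> bool" where
  "perfect_set P \<longleftrightarrow> closed P \<and> (\<forall>x\<in>P. x islimpt P)"

definition nowhere_dense :: "real set \<Rightarrow> bool" where
  "nowhere_dense A \<longleftrightarrow> interior (closure A) = {}"

definition meager :: "real set \<Rightarrow> bool" where
  "meager A \<longleftrightarrow> (\<exists>F. countable F \<and> (\<forall>N\<in>F. nowhere_dense N) \<and> A \<subseteq> \<Union>F)"

end

theory Submission
  imports Defs
begin


lemma meager_subset: "meager B \<Longrightarrow> A \<subseteq> B \<Longrightarrow> meager A"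
  unfolding meager_def by (meson order_trans)

lemma meager_empty: "meager {}"
  unfolding meager_def by (rule exI[of _ "{}"]) simp

lemma nowhere_dense_meager: "nowhere_dense N \<Longrightarrow> meager N"
  unfolding meager_def by (rule exI[of _ "{N}"]) simp

lemma meager_UN:
  assumes "countable I" "\<And>i. i \<in> I \<Longrightarrow> meager (A i)"
  shows "meager (\<Union>i\<in>I. A i)"
proof -
  from assms(2) have "\<forall>i\<in>I. \<exists>F. countable F \<and> (\<forall>N\<in>F. nowhere_dense N) \<and> A i \<subseteq> \<Union>F"
    unfolding meager_def by blast
  then obtain F where F: "\<And>i. i \<in> I \<Longrightarrow> countable (F i) \<and> (\<forall>N\<in>F i. nowhere_dense N) \<and> A i \<subseteq> \<Union>(F i)"
    by metis
  show ?thesis unfolding meager_def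
  proof (intro exI conjI)
    show "countable (\<Union>i\<in>I. F i)" by (rule countable_UN[OF assms(1)]) (use F in blast)
    show "\<forall>N\<in>(\<Union>i\<in>I. F i). nowhere_dense N" using F by blast
    show "(\<Union>i\<in>I. A i) \<subseteq> \<Union>(\<Union>i\<in>I. F i)"
    proof
      fix x assume "x \<in> (\<Union>i\<in>I. A i)"
      then obtain i where "i \<in> I" "x \<in> A i" by blast
      then obtain N where "N \<in> F i" "x \<in> N" using F by blast
      then show "x \<in> \<Union>(\<Union>i\<in>I. F i)" using \<open>i \<in> I\<close> by blast
    qed
  qed
qed

lemma meager_Un: "meager A \<Longrightarrow> meager B \<Longrightarrow> meager (A \<union> B)"
proof -
  assume "meager A" "meager B"
  then obtain F1 F2 where F1: "countable F1" "\<forall>N\<in>F1. nowhere_dense N" "A \<subseteq> \<Union>F1"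
    and F2: "countable F2" "\<forall>N\<in>F2. nowhere_dense N" "B \<subseteq> \<Union>F2"
    unfolding meager_def by blast
  show ?thesis unfolding meager_def
  proof (intro exI conjI)
    show "countable (F1 \<union> F2)" using F1(1) F2(1) by (rule countable_Un)
    show "\<forall>N\<in>F1 \<union> F2. nowhere_dense N" using F1(2) F2(2) by blast
    show "A \<union> B \<subseteq> \<Union>(F1 \<union> F2)" using F1(3) F2(3) by blast
  qed
qed

lemma closed_nowhere_dense: "closed F \<Longrightarrow> interior F = {} \<Longrightarrow> nowhere_dense F"
  unfolding nowhere_dense_def by (simp add: closure_closed)

lemma frontier_open_nowhere_dense:
  assumes "open U" shows "nowhere_dense (closure U - U)"
proof (rule closed_nowhere_dense)
  show "closed (closure U - U)" using assms by (simp add: closed_Diff)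
  show "interior (closure U - U) = {}"
  proof (rule ccontr)
    assume "interior (closure U - U) \<noteq> {}"
    then obtain x where x: "x \<in> interior (closure U - U)" by blast
    have "open (interior (closure U - U))" by simp
    moreover have "x \<in> closure U" using x interior_subset by blast
    ultimately have "interior (closure U - U) \<inter> U \<noteq> {}"
      using x open_Int_closure_eq_empty[of "interior (closure U - U)" U] by blast
    then show False using interior_subset by blast
  qed
qed

definition BP :: "real set \<Rightarrow> bool" where
  "BP E \<longleftrightarrow> (\<exists>U. open U \<and> meager ((E - U) \<union> (U - E)))"

lemma borel_BP:
  assumes "E \<in> sets borel" shows "BP E"
proof -
  have "E \<in> sigma_sets UNIV {S. open S}" using assms sets_borel by blast
  then show ?thesis
  proof (induction rule: sigma_sets.induct)
    case (Basic a)
    then show ?case unfolding BP_def by (intro exI[of _ a]) (auto simp: meager_empty)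
  next
    case Empty
    then show ?case unfolding BP_def by (intro exI[of _ "{}"]) (auto simp: meager_empty)
  next
    case (Compl a)
    then obtain U where U: "open U" "meager ((a - U) \<union> (U - a))" unfolding BP_def by blast
    have "((UNIV - a) - (- closure U)) \<union> ((- closure U) - (UNIV - a)) \<subseteq>
        ((a - U) \<union> (U - a)) \<union> (closure U - U)"
      using closure_subset[of U] by blast
    moreover have "meager (((a - U) \<union> (U - a)) \<union> (closure U - U))"
      by (rule meager_Un[OF U(2) nowhere_dense_meager[OF frontier_open_nowhere_dense[OF U(1)]]])
    ultimately show ?case unfolding BP_def
      by (intro exI[of _ "- closure U"]) (auto intro: meager_subset)
  next
    case (Union A)
    then have "\<forall>i. \<exists>U. open U \<and> meager ((A i - U) \<union> (U - A i))" unfolding BP_def by blast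
    then obtain U where U: "\<And>i. open (U i)" "\<And>i. meager ((A i - U i) \<union> (U i - A i))" by metis
    have "((\<Union>i. A i) - (\<Union>i. U i)) \<union> ((\<Union>i. U i) - (\<Union>i. A i)) \<subseteq> (\<Union>i\<in>UNIV. (A i - U i) \<union> (U i - A i))"
      by blast
    moreover have "meager (\<Union>i\<in>UNIV. (A i - U i) \<union> (U i - A i))"
      using U by (intro meager_UN) auto
    ultimately show ?case unfolding BP_def
      by (intro exI[of _ "\<Union>i. U i"]) (auto intro: meager_subset U)
  qed
qed

lemma open_not_meager:
  assumes "open U" "U \<noteq> {}" shows "\<not> meager U"
proof
  assume "meager U"
  then obtain F where F: "countable F" "\<And>N. N \<in> F \<Longrightarrow> nowhere_dense N" "U \<subseteq> \<Union>F"
    unfolding meager_def by blast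
  let ?G = "(\<lambda>N. - closure N) ` F"
  have "(UNIV::real set) \<subseteq> closure (\<Inter>?G)"
  proof (rule Baire)
    show "closed (UNIV::real set)" by simp
    show "countable ?G" using F by simp
    fix T assume "T \<in> ?G"
    then obtain N where N: "N \<in> F" "T = - closure N" by blast
    have "closure T = UNIV" using N F(2)[OF N(1)] by (simp add: closure_complement nowhere_dense_def)
    then show "openin (top_of_set UNIV) T \<and> UNIV \<subseteq> closure T"
      using N by auto
  qed
  then have "closure (\<Inter>?G) = UNIV" by blast
  then have "U \<inter> \<Inter>?G \<noteq> {}"
    using assms open_Int_closure_eq_empty[of U "\<Inter>?G"] by auto
  then obtain y where y: "y \<in> U" "y \<in> \<Inter>?G" by blast
  then obtain N where "N \<in> F" "y \<in> N" using F by blast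
  then show False using y closure_subset by blast
qed



lemma ccc_meager:
  assumes "\<And>t. t \<in> I \<Longrightarrow> E t \<in> sets borel"
    "\<And>s t. s \<in> I \<Longrightarrow> t \<in> I \<Longrightarrow> s \<noteq> t \<Longrightarrow> E s \<inter> E t = {}"
  shows "countable {t\<in>I. \<not> meager (E t)}"
proof -
  obtain \<B> :: "real set set" where B: "countable \<B>" "\<And>C. C\<in>\<B> \<Longrightarrow> open C"
    "\<And>S. open S \<Longrightarrow> \<exists>U. U \<subseteq> \<B> \<and> S = \<Union>U" using univ_second_countable by blast
  let ?J = "{t\<in>I. \<not> meager (E t)}"
  have ex: "\<exists>b. b \<in> \<B> \<and> b \<noteq> {} \<and> meager (b - E t)" if t: "t \<in> ?J" for t
  proof -
    obtain U where U: "open U" "meager ((E t - U) \<union> (U - E t))"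
      using borel_BP[OF assms(1)] t unfolding BP_def by blast
    have "U \<noteq> {}"
    proof
      assume "U = {}"
      then have "meager (E t)" using U(2) by simp
      then show False using t by blast
    qed
    obtain W where W: "W \<subseteq> \<B>" "U = \<Union>W" using B(3)[OF U(1)] by blast
    then obtain b where b: "b \<in> W" "b \<noteq> {}" using \<open>U \<noteq> {}\<close> by blast
    have "meager (b - E t)" using W b by (intro meager_subset[OF U(2)]) blast
    then show ?thesis using W b by blast
  qed
  define g where "g t = (SOME b. b \<in> \<B> \<and> b \<noteq> {} \<and> meager (b - E t))" for t
  have g: "g t \<in> \<B> \<and> g t \<noteq> {} \<and> meager (g t - E t)" if "t \<in> ?J" for t
    unfolding g_def using someI_ex[OF ex[OF that]] .
  have inj: "inj_on g ?J"
  proof (rule inj_onI)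
    fix s t assume s: "s \<in> ?J" and t: "t \<in> ?J" and eq: "g s = g t"
    show "s = t"
    proof (rule ccontr)
      assume "s \<noteq> t"
      then have "E s \<inter> E t = {}" using assms(2) s t by blast
      then have "g t \<subseteq> (g s - E s) \<union> (g t - E t)" using eq by blast
      moreover have "meager ((g s - E s) \<union> (g t - E t))"
        using g[OF s] g[OF t] by (intro meager_Un) auto
      ultimately have "meager (g t)" by (rule meager_subset[rotated])
      then show False using open_not_meager[of "g t"] g[OF t] B(2) by blast
    qed
  qed
  have sub: "g ` ?J \<subseteq> \<B>" using g by blast
  have "countable (g ` ?J)" by (rule countable_subset[OF sub B(1)])
  then show ?thesis by (rule countable_image_inj_on[OF _ inj])
qed

lemma ccc_null:
  fixes E :: "'a \<Rightarrow> real set"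
  assumes "\<And>t. t \<in> I \<Longrightarrow> E t \<in> sets borel"
    "\<And>s t. s \<in> I \<Longrightarrow> t \<in> I \<Longrightarrow> s \<noteq> t \<Longrightarrow> E s \<inter> E t = {}"
  shows "countable {t\<in>I. E t \<notin> null_sets lborel}"
proof -
  define C where "C n = {- real n..real n}" for n :: nat
  define J where "J n k = {t\<in>I. 1 / real (Suc k) < measure lborel (E t \<inter> C n)}" for n k :: nat
  have Cf: "C n \<in> fmeasurable lborel" for n
    unfolding C_def by (simp add: fmeasurable_compact)
  have fm: "E t \<inter> C n \<in> fmeasurable lborel" if "t \<in> I" for t n
    by (rule fmeasurableI2[OF Cf]) (use assms(1)[OF that] in \<open>auto simp: C_def\<close>)
  have sub: "{t\<in>I. E t \<notin> null_sets lborel} \<subseteq> (\<Union>n. \<Union>k. J n k)"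
  proof
    fix t assume t: "t \<in> {t\<in>I. E t \<notin> null_sets lborel}"
    have "\<exists>n. E t \<inter> C n \<notin> null_sets lborel"
    proof (rule ccontr)
      assume "\<not> ?thesis"
      then have "(\<Union>n. E t \<inter> C n) \<in> null_sets lborel" by (intro null_sets_UN) auto
      moreover have "(\<Union>n. E t \<inter> C n) = E t"
      proof
        show "E t \<subseteq> (\<Union>n. E t \<inter> C n)"
        proof
          fix x assume "x \<in> E t"
          obtain n where "\<bar>x\<bar> \<le> real n" using real_arch_simple by blast
          then show "x \<in> (\<Union>n. E t \<inter> C n)" using \<open>x \<in> E t\<close> unfolding C_def by (intro UN_I[of n]) (auto simp: abs_le_iff)
        qed
      qed blast
      ultimately show False using t by simp
    qed
    then obtain n where n: "E t \<inter> C n \<notin> null_sets lborel" by blast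
    have "measure lborel (E t \<inter> C n) \<noteq> 0"
    proof
      assume "measure lborel (E t \<inter> C n) = 0"
      then have "emeasure lborel (E t \<inter> C n) = 0"
        using fm[of t n] t by (simp add: emeasure_eq_measure2)
      then show False using n fm[of t n] t by (auto simp: fmeasurable_def)
    qed
    then have "0 < measure lborel (E t \<inter> C n)" using measure_nonneg[of lborel "E t \<inter> C n"] by linarith
    then obtain k where "inverse (real (Suc k)) < measure lborel (E t \<inter> C n)"
      using reals_Archimedean by blast
    then show "t \<in> (\<Union>n. \<Union>k. J n k)" using t unfolding J_def by (auto simp: field_simps)
  qed
  have fin: "finite (J n k)" for n k
  proof (rule ccontr)
    assume "infinite (J n k)"
    then obtain X where X: "finite X" "card X = Suc (2 * n * Suc k)" "X \<subseteq> J n k"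
      by (meson infinite_arbitrarily_large)
    have XI: "X \<subseteq> I" using X(3) unfolding J_def by auto
    have "X \<noteq> {}" using X(2) by auto
    have "real (card X) / real (Suc k) = (\<Sum>t\<in>X. 1 / real (Suc k))" by simp
    also have "\<dots> < (\<Sum>t\<in>X. measure lborel (E t \<inter> C n))"
      using X \<open>X \<noteq> {}\<close> unfolding J_def by (intro sum_strict_mono) auto
    also have "\<dots> = measure lborel (\<Union>t\<in>X. E t \<inter> C n)"
      using fm XI assms(2) X(1)
      by (intro measure_UNION'[symmetric]) (auto simp: pairwise_def disjnt_def, blast)
    also have "\<dots> \<le> measure lborel (C n)"
    proof (rule measure_mono_fmeasurable)
      show "(\<Union>t\<in>X. E t \<inter> C n) \<in> sets lborel"
        using fm XI X(1) by (intro sets.finite_UN) (auto simp: fmeasurable_def)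
    qed (use Cf in auto)
    also have "\<dots> = 2 * real n" unfolding C_def by (simp add: measure_def)
    finally have "real (card X) < 2 * real n * real (Suc k)" by (simp add: field_simps)
    then show False using X(2) by (simp add: algebra_simps)
  qed
  show ?thesis
    by (rule countable_subset[OF sub]) (intro countable_UN countableI_type countable_finite[OF fin])
qed



definition S5 :: "(nat \<Rightarrow> nat) \<Rightarrow> real" where
  "S5 d = (\<Sum>k. real (d k) / 5 ^ Suc k)"

definition dsq :: "(nat \<Rightarrow> nat) \<Rightarrow> (nat \<Rightarrow> nat) \<Rightarrow> nat \<Rightarrow> real" where
  "dsq d d' k = (real (d k) - real (d' k)) / 5 ^ Suc k"

lemma geom5: "(\<lambda>n. 3 / 5 ^ Suc (n + m) :: real) sums (3 / (4 * 5 ^ m))"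
proof -
  have "(\<lambda>n. (1/5::real) ^ n) sums (1 / (1 - 1/5))" by (rule geometric_sums) simp
  then have "(\<lambda>n. (3 / 5 ^ Suc m) * (1/5::real) ^ n) sums ((3 / 5 ^ Suc m) * (1 / (1 - 1/5)))"
    by (rule sums_mult)
  moreover have "(\<lambda>n. (3 / 5 ^ Suc m) * (1/5::real) ^ n) = (\<lambda>n. 3 / 5 ^ Suc (n + m))"
    by (rule ext) (simp add: power_add power_divide field_simps)
  moreover have "(3 / 5 ^ Suc m) * (1 / (1 - 1/5)) = (3 / (4 * 5 ^ m) :: real)"
    by (simp add: field_simps)
  ultimately show ?thesis by (metis mult.commute)
qed

lemma bound_sum:
  fixes g b :: "nat \<Rightarrow> real"
  assumes "\<And>n. \<bar>g n\<bar> \<le> b n" "b sums B"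
  shows "summable g" "\<bar>suminf g\<bar> \<le> B"
proof -
  have sn: "summable (\<lambda>n. norm (g n))"
  proof (rule summable_comparison_test[of _ b])
    show "\<exists>N. \<forall>n\<ge>N. norm (norm (g n)) \<le> b n" using assms(1) by simp
    show "summable b" using assms(2) by (simp add: sums_iff)
  qed
  then show "summable g" by (rule summable_norm_cancel)
  have "\<bar>suminf g\<bar> \<le> (\<Sum>n. norm (g n))" using summable_norm[OF sn] by simp
  also have "\<dots> \<le> suminf b"
  proof (rule suminf_le)
    show "\<And>n. norm (g n) \<le> b n" using assms(1) by simp
    show "summable b" using assms(2) by (simp add: sums_iff)
  qed (rule sn)
  also have "\<dots> = B" using assms(2) by (simp add: sums_iff)
  finally show "\<bar>suminf g\<bar> \<le> B" .
qed

lemma summable_S5: assumes "\<And>k. d k \<le> 3" shows "summable (\<lambda>k. real (d k) / 5 ^ Suc k)"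
proof (rule bound_sum(1))
  show "(\<lambda>n. 3 / 5 ^ Suc (n + 0) :: real) sums (3 / (4 * 5 ^ 0))" by (rule geom5)
  fix n show "\<bar>real (d n) / 5 ^ Suc n\<bar> \<le> 3 / 5 ^ Suc (n + 0)"
    using assms[of n] by (simp add: divide_right_mono)
qed

lemma tail_bound:
  assumes "\<And>k. d k \<le> 3" "\<And>k. d' k \<le> 3"
  shows "\<bar>\<Sum>n. dsq d d' (n + m)\<bar> \<le> 3 / (4 * 5 ^ m)"
proof (rule bound_sum(2)[OF _ geom5])
  fix n
  have "\<bar>real (d (n+m)) - real (d' (n+m))\<bar> \<le> 3" using assms(1,2)[of "n+m"] by linarith
  then show "\<bar>dsq d d' (n + m)\<bar> \<le> 3 / 5 ^ Suc (n + m)"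
    unfolding dsq_def by (simp add: abs_divide divide_right_mono)
qed

lemma summable_dsq:
  assumes "\<And>k. d k \<le> 3" "\<And>k. d' k \<le> 3"
  shows "summable (dsq d d')"
  unfolding dsq_def diff_divide_distrib
  by (rule summable_diff) (use summable_S5[of d] summable_S5[of d'] assms in auto)

lemma tail_eq:
  assumes "\<And>k. d k \<le> 3" "\<And>k. d' k \<le> 3" "\<And>k. k < m \<Longrightarrow> d k = d' k"
  shows "S5 d - S5 d' = (\<Sum>n. dsq d d' (n + m))"
proof -
  have sd: "summable (dsq d d')" by (rule summable_dsq) (use assms in auto)
  have "S5 d - S5 d' = suminf (dsq d d')" unfolding S5_def dsq_def diff_divide_distrib
    by (rule suminf_diff) (use summable_S5[of d] summable_S5[of d'] assms in auto)
  also have "\<dots> = (\<Sum>n. dsq d d' (n + m)) + (\<Sum>i<m. dsq d d' i)"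
    by (rule suminf_split_initial_segment[OF sd])
  also have "(\<Sum>i<m. dsq d d' i) = 0" using assms(3) by (simp add: dsq_def)
  finally show ?thesis by simp
qed

lemma sep:
  assumes "\<And>k. d k \<le> 3" "\<And>k. d' k \<le> 3" "\<And>k. k < m \<Longrightarrow> d k = d' k" "d m \<noteq> d' m"
  shows "1 / (4 * 5 ^ Suc m) \<le> \<bar>S5 d - S5 d'\<bar>"
proof -
  have t0: "S5 d - S5 d' = (\<Sum>n. dsq d d' (n + m))" by (rule tail_eq) (use assms in auto)
  have "summable (dsq d d')" by (rule summable_dsq) (use assms in auto)
  then have sd: "summable (\<lambda>n. dsq d d' (n + m))" by (rule summable_ignore_initial_segment)
  define X where "X = (\<Sum>n. dsq d d' (n + m))"
  define T where "T = (\<Sum>n. dsq d d' (n + Suc m))"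
  define a where "a = dsq d d' m"
  define q :: real where "q = 5 ^ Suc m"
  have q: "q > 0" unfolding q_def by simp
  have "(\<Sum>n. dsq d d' (Suc n + m)) = (\<Sum>n. dsq d d' (n + m)) - dsq d d' m"
    using suminf_split_head[OF sd] by simp
  then have e: "T = X - a" unfolding T_def X_def a_def by simp
  have hT: "\<bar>T\<bar> \<le> 3 / (4 * q)" unfolding T_def q_def
    by (rule tail_bound) (use assms in auto)
  have ha: "1 / q \<le> \<bar>a\<bar>" unfolding a_def q_def
  proof -
    have "1 \<le> \<bar>real (d m) - real (d' m)\<bar>" using assms(4) by linarith
    then show "1 / 5 ^ Suc m \<le> \<bar>dsq d d' m\<bar>" unfolding dsq_def by (simp add: abs_divide divide_right_mono)
  qed
  have tri: "\<bar>a\<bar> \<le> \<bar>X\<bar> + \<bar>T\<bar>" using e abs_triangle_ineq4[of X T] by simp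
  have "1 / q - 3 / (4 * q) = 1 / (4 * q)" using q by (simp add: field_simps)
  then have "1 / (4 * q) \<le> \<bar>X\<bar>" using tri ha hT by linarith
  then show ?thesis unfolding q_def X_def t0 .
qed



definition dig :: "(nat \<Rightarrow> bool) \<Rightarrow> (nat \<Rightarrow> bool) \<Rightarrow> nat \<Rightarrow> nat" where
  "dig t a k = (if t k then 2 else 0) + (if a k then 1 else 0)"

definition Pset :: "(nat \<Rightarrow> bool) \<Rightarrow> real set" where
  "Pset t = range (\<lambda>a. S5 (dig t a))"

lemma dig_le: "dig t a k \<le> 3" unfolding dig_def by auto

lemma Pset_limpt:
  assumes "x \<in> Pset t" shows "x islimpt Pset t"
proof -
  obtain a where x: "x = S5 (dig t a)" using assms unfolding Pset_def by blast
  show ?thesis unfolding islimpt_approachable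
  proof (intro allI impI)
    fix e :: real assume "0 < e"
    obtain N where N: "(1/5::real) ^ N < e" using real_arch_pow_inv[OF \<open>0 < e\<close>, of "1/5"] by auto
    define a' where "a' = a(N := \<not> a N)"
    have agree: "\<And>k. k < N \<Longrightarrow> dig t a' k = dig t a k" unfolding a'_def dig_def by auto
    have differ: "dig t a' N \<noteq> dig t a N" unfolding a'_def dig_def by auto
    have "1 / (4 * 5 ^ Suc N) \<le> \<bar>S5 (dig t a') - S5 (dig t a)\<bar>"
      by (rule sep) (use dig_le agree differ in auto)
    note lb = this
    have pos: "(0::real) < 1 / (4 * 5 ^ Suc N)" by simp
    have ne: "S5 (dig t a') \<noteq> x"
    proof
      assume "S5 (dig t a') = x"
      then have "\<bar>S5 (dig t a') - S5 (dig t a)\<bar> = 0" using x by simp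
      then show False using pos lb by linarith
    qed
    have te: "S5 (dig t a') - S5 (dig t a) = (\<Sum>n. dsq (dig t a') (dig t a) (n + N))"
      by (rule tail_eq) (use dig_le agree in auto)
    have "\<bar>\<Sum>n. dsq (dig t a') (dig t a) (n + N)\<bar> \<le> 3 / (4 * 5 ^ N)"
      by (rule tail_bound) (use dig_le in auto)
    then have "\<bar>S5 (dig t a') - S5 (dig t a)\<bar> \<le> 3 / (4 * 5 ^ N)" unfolding te .
    also have "\<dots> < (1/5) ^ N"
    proof -
      have y: "(0::real) < 1 / 5 ^ N" by simp
      have e1: "3 / (4 * 5 ^ N) = (3/4) * (1 / (5::real) ^ N)" by simp
      have e2: "(1/5::real) ^ N = 1 / 5 ^ N" by (rule power_one_over)
      show ?thesis unfolding e1 e2 using y by linarith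
    qed
    finally have "\<bar>S5 (dig t a') - S5 (dig t a)\<bar> < e" using N by linarith
    then have "dist (S5 (dig t a')) x < e" using x by (simp add: dist_real_def)
    moreover have "S5 (dig t a') \<in> Pset t" unfolding Pset_def by (rule rangeI)
    ultimately show "\<exists>x'\<in>Pset t. x' \<noteq> x \<and> dist x' x < e" using ne by (intro bexI[of _ "S5 (dig t a')"]) simp_all
  qed
qed

lemma Pset_sep:
  assumes "s n \<noteq> t n" "x \<in> Pset s" "y \<in> Pset t"
  shows "1 / (4 * 5 ^ Suc n) \<le> \<bar>x - y\<bar>"
proof -
  obtain a b where x: "x = S5 (dig s a)" and y: "y = S5 (dig t b)"
    using assms unfolding Pset_def by blast
  have dn: "dig s a n \<noteq> dig t b n" using assms(1) unfolding dig_def by auto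
  define m where "m = (LEAST k. dig s a k \<noteq> dig t b k)"
  have m1: "dig s a m \<noteq> dig t b m" unfolding m_def by (rule LeastI[of _ n]) (rule dn)
  have m2: "m \<le> n" unfolding m_def by (rule Least_le) (rule dn)
  have m3: "dig s a k = dig t b k" if "k < m" for k
    using not_less_Least[of k "\<lambda>k. dig s a k \<noteq> dig t b k"] that unfolding m_def by simp
  have "1 / (4 * 5 ^ Suc n) \<le> (1 / (4 * 5 ^ Suc m) :: real)"
  proof -
    have "(5::real) ^ Suc m \<le> 5 ^ Suc n" by (rule power_increasing) (use m2 in auto)
    then have h: "4 * (5::real) ^ Suc m \<le> 4 * 5 ^ Suc n" by simp
    show ?thesis by (rule divide_left_mono[OF h]) simp_all
  qed
  also have "\<dots> \<le> \<bar>x - y\<bar>" unfolding x y by (rule sep) (use dig_le m3 m1 in auto)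
  finally show ?thesis .
qed

lemma closure_Pset_disjoint:
  assumes "s \<noteq> t" shows "closure (Pset s) \<inter> closure (Pset t) = {}"
proof (rule ccontr)
  assume "closure (Pset s) \<inter> closure (Pset t) \<noteq> {}"
  then obtain z where z: "z \<in> closure (Pset s)" "z \<in> closure (Pset t)" by blast
  have "\<exists>n. s n \<noteq> t n" using assms by (simp add: fun_eq_iff)
  then obtain n where n: "s n \<noteq> t n" by blast
  define \<delta> :: real where "\<delta> = 1 / (4 * 5 ^ Suc n)"
  have "\<delta> > 0" unfolding \<delta>_def by simp
  then have h: "\<delta>/2 > 0" by simp
  obtain x where "x \<in> Pset s" "dist x z < \<delta>/2"
    using z(1) h unfolding closure_approachable by blast
  moreover obtain y where "y \<in> Pset t" "dist y z < \<delta>/2"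
    using z(2) h unfolding closure_approachable by blast
  moreover have "\<delta> \<le> \<bar>x - y\<bar>" unfolding \<delta>_def using Pset_sep[OF n \<open>x \<in> Pset s\<close> \<open>y \<in> Pset t\<close>] .
  moreover have "\<bar>x - y\<bar> \<le> \<bar>x - z\<bar> + \<bar>y - z\<bar>"
    using abs_triangle_ineq4[of "x - z" "y - z"] by simp
  ultimately show False by (simp add: dist_real_def)
qed

lemma uncountable_bool_seq: "uncountable (UNIV :: (nat \<Rightarrow> bool) set)"
proof
  assume "countable (UNIV :: (nat \<Rightarrow> bool) set)"
  then obtain g :: "nat \<Rightarrow> (nat \<Rightarrow> bool)" where g: "range g = UNIV"
    using uncountable_def by blast
  define h where "h n = (\<not> g n n)" for n
  have "h \<in> range g" using g by simp
  then obtain k where "h = g k" by blast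
  then have "h k = g k k" by simp
  then show False unfolding h_def by simp
qed

theorem mainTheorem16:
  fixes f :: "real \<Rightarrow> real"
  assumes "f \<in> borel_measurable borel"
  shows "\<exists>P. P \<noteq> {} \<and> perfect_set P \<and> meager (f -` P) \<and> f -` P \<in> null_sets lebesgue"
proof -
  define E where "E t = f -` closure (Pset t)" for t
  have Eb: "E t \<in> sets borel" for t
  proof -
    have "f -` closure (Pset t) \<inter> space borel \<in> sets borel"
      by (rule measurable_sets[OF assms]) simp
    then show ?thesis unfolding E_def by simp
  qed
  have Ed: "E s \<inter> E t = {}" if "s \<noteq> t" for s t
    using closure_Pset_disjoint[OF that] unfolding E_def by blast
  have c1: "countable {t\<in>UNIV. \<not> meager (E t)}" by (rule ccc_meager) (use Eb Ed in auto)
  have c2: "countable {t\<in>UNIV. E t \<notin> null_sets lborel}" by (rule ccc_null) (use Eb Ed in auto)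
  have "countable ({t\<in>UNIV. \<not> meager (E t)} \<union> {t\<in>UNIV. E t \<notin> null_sets lborel})"
    using c1 c2 by simp
  moreover have "\<not> countable (UNIV :: (nat \<Rightarrow> bool) set)" using uncountable_bool_seq .
  ultimately have "({t\<in>UNIV. \<not> meager (E t)} \<union> {t\<in>UNIV. E t \<notin> null_sets lborel}) \<noteq> UNIV"
    by metis
  then obtain t where "t \<notin> ({t\<in>UNIV. \<not> meager (E t)} \<union> {t\<in>UNIV. E t \<notin> null_sets lborel})"
    by blast
  then have t: "meager (E t)" "E t \<in> null_sets lborel" by auto
  have ne: "closure (Pset t) \<noteq> {}" unfolding Pset_def by simp
  have perf: "perfect_set (closure (Pset t))"
    unfolding perfect_set_def
  proof (intro conjI ballI)
    show "closed (closure (Pset t))" by simp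
    fix x assume "x \<in> closure (Pset t)"
    then have "x \<in> Pset t \<or> x islimpt Pset t" unfolding closure_def by blast
    then have "x islimpt Pset t" using Pset_limpt by blast
    then show "x islimpt closure (Pset t)" by (rule islimpt_subset) (rule closure_subset)
  qed
  show ?thesis
    using ne perf t null_sets_completionI[OF t(2)] unfolding E_def by blast
qed

end
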